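(* Let $\mathcal{A}_l\subseteq\mathcal{A}$ be nonempty, $\alpha\in[0,1)$, and let $\pi^{(t)}\in\Delta(\mathcal{A}_l)$ be such that $(1-\alpha)V_{\pi^{(t)}}+\alpha V_{\pi_{\mathrm{off}}}$ is nonsingular. Let $\pi^{(t+1)}$ be obtained from $\pi^{(t)}$ by one Frank–Wolfe update as in the context. Then $$d(\pi^{(t+1)},\mathcal{A}_l,\alpha)-d(\pi^{(t)},\mathcal{A}_l,\alpha)\ge m(\delta(\pi^{(t)})),\qquad m(\delta):=\log(1+\delta)-\frac{\delta}{1+\delta}.$$
   Context: $\mathcal{A}\subset\mathbb{R}^d$ finite, spanning $\mathbb{R}^d$, with $d\ge2$; $\pi_{\mathrm{off}}\in\Delta(\mathcal{A})$; $V_\pi=\sum_a\pi(a)aa^\top$; $d(\pi,\mathcal{A}_l,\alpha)=\log\det(\alpha V_{\pi_{\mathrm{off}}}+(1-\alpha)V_\pi)$. For $\pi$ with $(1-\alpha)V_\pi+\alpha V_{\pi_{\mathrm{off}}}$ nonsingular let $H(\pi)=((1-\alpha)V_\pi+\alpha V_{\pi_{\mathrm{off}}})^{-1}$, $w_a=\mathrm{Tr}\big(H(\pi)((1-\alpha)aa^\top+\alpha V_{\pi_{\mathrm{off}}})\big)$ for $a\in\mathcal{A}_l$, $a_+\in\arg\max_{a\in\mathcal{A}_l}w_a$, and the slack $\delta(\pi)=\frac{w_{a_+}}{d}-1$. Frank–Wolfe update: with $w,a_+$ computed at $\pi^{(t)}$ and $\beta=\frac{w_{a_+}-d}{(d-1)w_{a_+}}$,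 $\pi^{(t+1)}=(1+\beta)^{-1}(\pi^{(t)}+\beta\mathbb{1}_{\{a_+\}})$. *)

theory Defs
  imports "HOL-Analysis.Analysis"
begin

definition outer :: "real^'n \<Rightarrow> real^'n^'n" where
  "outer a = (\<chi> i j. a $ i * a $ j)"

definition Vmat :: "(real^'n) set \<Rightarrow> (real^'n \<Rightarrow> real) \<Rightarrow> real^'n^'n" where
  "Vmat S \<pi> = (\<Sum>a\<in>S. \<pi> a *\<^sub>R outer a)"

definition is_dist :: "(real^'n) set \<Rightarrow> (real^'n \<Rightarrow> real) \<Rightarrow> bool" where
  "is_dist S \<pi> \<longleftrightarrow> (\<forall>a. 0 \<le> \<pi> a) \<and> (\<forall>a. a \<notin> S \<longrightarrow> \<pi> a = 0) \<and> sum \<pi> S = 1"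

definition Mmat :: "(real^'n) set \<Rightarrow> (real^'n) set \<Rightarrow> (real^'n \<Rightarrow> real) \<Rightarrow> real
    \<Rightarrow> (real^'n \<Rightarrow> real) \<Rightarrow> real^'n^'n" where
  "Mmat A Al \<pi>off \<alpha> \<pi> = (1 - \<alpha>) *\<^sub>R Vmat Al \<pi> + \<alpha> *\<^sub>R Vmat A \<pi>off"

definition dobj :: "(real^'n) set \<Rightarrow> (real^'n) set \<Rightarrow> (real^'n \<Rightarrow> real) \<Rightarrow> real
    \<Rightarrow> (real^'n \<Rightarrow> real) \<Rightarrow> real" where
  "dobj A Al \<pi>off \<alpha> \<pi> = ln (det (Mmat A Al \<pi>off \<alpha> \<pi>))"

definition wgt :: "(real^'n) set \<Rightarrow> (real^'n) set \<Rightarrow> (real^'n \<Rightarrow> real) \<Rightarrow> real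
    \<Rightarrow> (real^'n \<Rightarrow> real) \<Rightarrow> real^'n \<Rightarrow> real" where
  "wgt A Al \<pi>off \<alpha> \<pi> a =
     trace (matrix_inv (Mmat A Al \<pi>off \<alpha> \<pi>) ** ((1 - \<alpha>) *\<^sub>R outer a + \<alpha> *\<^sub>R Vmat A \<pi>off))"

definition mfun :: "real \<Rightarrow> real" where
  "mfun \<delta> = ln (1 + \<delta>) - \<delta> / (1 + \<delta>)"

end

theory Submission
  imports Defs
begin



lemma minv:
  fixes N :: "real^'n^'n"
  assumes "invertible N"
  shows "N ** matrix_inv N = mat 1" "matrix_inv N ** N = mat 1"
  using someI_ex[OF assms[unfolded invertible_def]] unfolding matrix_inv_def by auto

lemma minv_v:
  fixes N :: "real^'n^'n"
  assumes "invertible N"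
  shows "N *v (matrix_inv N *v u) = u" "matrix_inv N *v (N *v u) = u"
  by (simp_all add: matrix_vector_mul_assoc minv[OF assms])

lemma outer_mv: "outer u *v x = (u \<bullet> x) *\<^sub>R u"
  by (simp add: outer_def vec_eq_iff matrix_vector_mult_def inner_vec_def sum_distrib_left mult_ac)

lemma outer_transpose: "transpose (outer u) = outer u"
  by (simp add: outer_def transpose_def vec_eq_iff mult.commute)

lemma inner_mv_sym:
  fixes N :: "real^'n^'n"
  assumes "transpose N = N"
  shows "x \<bullet> (N *v y) = y \<bullet> (N *v x)"
proof -
  have "x \<bullet> (N *v y) = (x v* N) \<bullet> y" by (simp add: dot_lmul_matrix)
  also have "x v* N = transpose N *v x" by simp
  finally show ?thesis using assms by (simp add: inner_commute)
qed

lemma quad_expand: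
  fixes N :: "real^'n^'n"
  assumes "transpose N = N"
  shows "(x + t *\<^sub>R y) \<bullet> (N *v (x + t *\<^sub>R y)) = x \<bullet> (N *v x) + 2 * t * (y \<bullet> (N *v x)) + t^2 * (y \<bullet> (N *v y))"
  using inner_mv_sym[OF assms, of x y]
  by (simp add: matrix_vector_mult_scaleR algebra_simps inner_add_left inner_add_right power2_eq_square)

definition psd :: "real^'n^'n \<Rightarrow> bool" where
  "psd N \<longleftrightarrow> transpose N = N \<and> (\<forall>x. 0 \<le> x \<bullet> (N *v x))"
definition pd :: "real^'n^'n \<Rightarrow> bool" where
  "pd N \<longleftrightarrow> transpose N = N \<and> (\<forall>x. x \<noteq> 0 \<longrightarrow> 0 < x \<bullet> (N *v x))"

lemma psd_outer: "psd (outer u)"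
  by (simp add: psd_def outer_transpose outer_mv inner_commute)

lemma psd_add: "psd A \<Longrightarrow> psd B \<Longrightarrow> psd (A + B)"
  by (auto simp: psd_def transpose_def vec_eq_iff matrix_vector_mult_add_rdistrib inner_add_right intro: add_nonneg_nonneg)

lemma psd_scale: "psd A \<Longrightarrow> 0 \<le> c \<Longrightarrow> psd (c *\<^sub>R A)"
  by (auto simp: psd_def transpose_scalar scaleR_matrix_vector_assoc[symmetric])

lemma psd_zero: "psd (0::real^'n^'n)"
  by (simp add: psd_def transpose_def vec_eq_iff)

lemma psd_sum: "finite S \<Longrightarrow> (\<And>i. i \<in> S \<Longrightarrow> psd (f i)) \<Longrightarrow> psd (sum f S)"
  by (induction S rule: finite_induct) (auto simp: psd_zero psd_add)

lemma pd_add_psd: "pd A \<Longrightarrow> psd B \<Longrightarrow> pd (A + B)"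
proof -
  assume a: "pd A" "psd B"
  have "transpose (A + B) = A + B" using a unfolding pd_def psd_def by (simp add: transpose_def vec_eq_iff)
  moreover have "\<forall>x. x \<noteq> 0 \<longrightarrow> 0 < x \<bullet> ((A + B) *v x)"
    using a unfolding pd_def psd_def by (auto simp: matrix_vector_mult_add_rdistrib inner_add_right intro: add_pos_nonneg)
  ultimately show ?thesis by (simp add: pd_def)
qed

lemma psd_kernel:
  fixes N :: "real^'n^'n"
  assumes "psd N" "x \<bullet> (N *v x) = 0"
  shows "N *v x = 0"
proof (rule ccontr)
  assume ne: "N *v x \<noteq> 0"
  define y where "y = N *v x"
  define a where "a = y \<bullet> (N *v x)"
  define b where "b = y \<bullet> (N *v y)"
  have a: "a > 0" using ne by (simp add: a_def y_def)
  have b: "b \<ge> 0" using assms(1) by (simp add: psd_def b_def)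
  define t where "t = - a / (b + 1)"
  have "0 \<le> (x + t *\<^sub>R y) \<bullet> (N *v (x + t *\<^sub>R y))" using assms(1) by (simp add: psd_def)
  also have "\<dots> = 2 * t * a + t^2 * b"
    using quad_expand[of N x t y] assms by (simp add: psd_def a_def b_def)
  also have "\<dots> = t * (2 * a + t * b)" by (simp add: power2_eq_square algebra_simps)
  finally have "0 \<le> t * (2 * a + t * b)" .
  moreover have "t < 0" using a b by (simp add: t_def)
  moreover have "2 * a + t * b > 0"
  proof -
    have "t * b = - a * (b / (b+1))" by (simp add: t_def)
    moreover have "b / (b+1) \<le> 1" using b by simp
    moreover have "a * (b / (b+1)) \<le> a" using mult_left_le[OF \<open>b / (b+1) \<le> 1\<close>, of a] a by linarith
    ultimately have "t * b \<ge> - a" by simp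
    then show ?thesis using a by linarith
  qed
  ultimately show False using mult_neg_pos[of t "2 * a + t * b"] by linarith
qed

lemma pd_invertible:
  fixes N :: "real^'n^'n"
  assumes "pd N" shows "invertible N"
proof -
  have "inj ((*v) N)"
  proof (rule injI)
    fix x y assume "N *v x = N *v y"
    then have "N *v (x - y) = 0" by (simp add: matrix_vector_mult_diff_distrib)
    then have "(x - y) \<bullet> (N *v (x - y)) = 0" by simp
    show "x = y"
    proof (rule ccontr)
      assume "x \<noteq> y" then have "x - y \<noteq> 0" by simp
      then have "0 < (x - y) \<bullet> (N *v (x - y))" using assms unfolding pd_def by blast
      with \<open>(x - y) \<bullet> (N *v (x - y)) = 0\<close> show False by simp
    qed
  qed
  then have "det (matrix ((*v) N)) \<noteq> 0"
    by (subst det_nz_iff_inj) (auto simp: matrix_vector_mul_linear)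
  then show ?thesis by (simp add: invertible_det_nz)
qed

lemma psd_inv_pd:
  fixes N :: "real^'n^'n"
  assumes "psd N" "invertible N" shows "pd N"
  unfolding pd_def
proof safe
  show "transpose N = N" using assms by (simp add: psd_def)
  fix x :: "real^'n" assume "x \<noteq> 0"
  have "x \<bullet> (N *v x) \<ge> 0" using assms by (simp add: psd_def)
  moreover have "x \<bullet> (N *v x) \<noteq> 0"
  proof
    assume "x \<bullet> (N *v x) = 0"
    then have "N *v x = 0" using psd_kernel assms by blast
    then have "N *v x = N *v 0" by simp
    then have "x = 0" using inj_matrix_vector_mult[OF assms(2)] unfolding inj_def by blast
    then show False using \<open>x \<noteq> 0\<close> by simp
  qed
  ultimately show "x \<bullet> (N *v x) > 0" by simp
qed




lemma row_eq: "row i A = A $ i"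
  by (simp add: row_def vec_eq_iff)

lemma cs_pd:
  fixes N :: "real^'n^'n"
  assumes "pd N"
  shows "(u \<bullet> x)^2 \<le> (u \<bullet> (matrix_inv N *v u)) * (x \<bullet> (N *v x))"
proof -
  have inv: "invertible N" using pd_invertible[OF assms] .
  have sym: "transpose N = N" using assms by (simp add: pd_def)
  define y where "y = matrix_inv N *v u"
  have Ny: "N *v y = u" using minv_v[OF inv] by (simp add: y_def)
  define p where "p = y \<bullet> (N *v y)"
  define q where "q = x \<bullet> (N *v x)"
  define r where "r = y \<bullet> (N *v x)"
  have ux: "u \<bullet> x = r" unfolding r_def using inner_mv_sym[OF sym, of x y] Ny by (simp add: inner_commute)
  have uy: "u \<bullet> (matrix_inv N *v u) = p" unfolding p_def y_def[symmetric] using Ny by (simp add: inner_commute)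
  show ?thesis
  proof (cases "y = 0")
    case True
    then have "u = 0" using Ny by simp
    then show ?thesis by simp
  next
    case False
    then have pp: "p > 0" using assms by (simp add: pd_def p_def)
    define t where "t = - r / p"
    have "0 \<le> (x + t *\<^sub>R y) \<bullet> (N *v (x + t *\<^sub>R y))" using pd_add_psd psd_zero assms
      by (cases "x + t *\<^sub>R y = 0") (auto simp: pd_def less_imp_le)
    also have "\<dots> = q + 2 * t * r + t^2 * p" using quad_expand[OF sym, of x t y] by (simp add: q_def r_def p_def)
    also have "\<dots> = q - r^2 / p" using pp by (simp add: t_def power2_eq_square field_simps)
    finally have "r^2 / p \<le> q" by simp
    then have "r^2 \<le> p * q" using pp by (simp add: divide_le_eq mult.commute)
    then show ?thesis using ux uy by (simp add: q_def)
  qed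
qed

lemma mv_sum: "(sum f S) *v (x::real^'n) = (\<Sum>i\<in>S. f i *v x)"
  by (induction S rule: infinite_finite_induct) (auto simp: matrix_vector_mult_add_rdistrib)

definition Gm :: "'x set \<Rightarrow> ('x \<Rightarrow> real) \<Rightarrow> ('x \<Rightarrow> real^'n) \<Rightarrow> real^'n^'n" where
  "Gm S c u = (\<Sum>i\<in>S. c i *\<^sub>R outer (u i))"

lemma Gm_qf: "x \<bullet> (Gm S c u *v x) = (\<Sum>i\<in>S. c i * (u i \<bullet> x)^2)"
  unfolding Gm_def mv_sum inner_sum_right
  by (intro sum.cong refl) (simp add: scaleR_matrix_vector_assoc[symmetric] outer_mv inner_commute power2_eq_square)

lemma psd_Gm: "finite S \<Longrightarrow> (\<And>i. i \<in> S \<Longrightarrow> 0 \<le> c i) \<Longrightarrow> psd (Gm S c u)"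
  unfolding Gm_def by (intro psd_sum psd_scale psd_outer) auto

lemma Gm_bound:
  fixes N :: "real^'n^'n"
  assumes "pd N" "\<And>i. i \<in> S \<Longrightarrow> 0 \<le> c i"
  shows "x \<bullet> (Gm S c u *v x) \<le> (\<Sum>i\<in>S. c i * (u i \<bullet> (matrix_inv N *v u i))) * (x \<bullet> (N *v x))"
  unfolding Gm_qf sum_distrib_right
  by (intro sum_mono) (use cs_pd[OF assms(1)] assms(2) in \<open>auto simp: mult.assoc intro: mult_left_mono\<close>)

lemma inv_compare:
  fixes N G :: "real^'n^'n"
  assumes "pd N" "psd G" "\<And>x. x \<bullet> (G *v x) \<le> t * (x \<bullet> (N *v x))" "0 \<le> t"
  shows "u \<bullet> (matrix_inv N *v u) \<le> (1 + t) * (u \<bullet> (matrix_inv (N + G) *v u))"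
proof -
  have pd': "pd (N + G)" using pd_add_psd assms by blast
  have inv: "invertible N" using pd_invertible[OF assms(1)] .
  have inv': "invertible (N + G)" using pd_invertible[OF pd'] .
  define z where "z = matrix_inv N *v u"
  have Nz: "N *v z = u" using minv_v[OF inv] by (simp add: z_def)
  define s where "s = u \<bullet> z"
  have s_eq: "z \<bullet> (N *v z) = s" using Nz by (simp add: s_def inner_commute)
  have s0: "s \<ge> 0" using assms(1) s_eq unfolding pd_def by (metis inner_zero_left order_refl less_imp_le)
  define r where "r = u \<bullet> (matrix_inv (N + G) *v u)"
  have r0: "r \<ge> 0"
  proof -
    define y where "y = matrix_inv (N + G) *v u"
    have "(N + G) *v y = u" using minv_v[OF inv'] by (simp add: y_def)
    then have "r = y \<bullet> ((N + G) *v y)" by (simp add: r_def y_def[symmetric] inner_commute)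
    then show ?thesis using pd' unfolding pd_def by (metis inner_zero_left order_refl less_imp_le)
  qed
  have "s^2 \<le> r * (z \<bullet> ((N + G) *v z))" using cs_pd[OF pd', of u z] by (simp add: s_def r_def)
  also have "z \<bullet> ((N + G) *v z) = s + z \<bullet> (G *v z)" using s_eq by (simp add: matrix_vector_mult_add_rdistrib inner_add_right)
  also have "r * \<dots> \<le> r * ((1 + t) * s)" using assms(3)[of z] s_eq r0 by (intro mult_left_mono) (auto simp: algebra_simps)
  finally have "s * s \<le> s * (r * (1 + t))" by (simp add: power2_eq_square mult_ac)
  then have "s \<le> r * (1 + t)" using s0
    by (cases "s = 0") (use r0 assms(4) in auto)
  then show ?thesis by (simp add: s_def z_def r_def mult.commute)
qed




lemma det_lemmaX:
  fixes N :: "real^'n^'n"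
  assumes "finite T" "j \<notin> T"
  shows "det (\<chi> i. if i = j then u else if i \<in> T then N $ i + d i *s u else N $ i)
       = det (\<chi> i. if i = j then u else N $ i)"
  using assms
proof (induction T rule: finite_induct)
  case empty then show ?case by (auto intro!: arg_cong[where f=det] simp: vec_eq_iff)
next
  case (insert t T)
  define A where "A = (\<chi> i. if i = j then u else if i \<in> T then N $ i + d i *s u else N $ i)"
  have tj: "t \<noteq> j" using insert by auto
  have "(\<chi> i. if i = j then u else if i \<in> insert t T then N $ i + d i *s u else N $ i)
      = (\<chi> k. if k = t then row t A + d t *s row j A else row k A)"
    using insert tj by (auto simp: vec_eq_iff row_eq A_def)
  also have "det \<dots> = det A" by (rule det_row_operation[OF tj])
  finally show ?case using insert by (simp add: A_def)
qed

lemma det_rows_expand: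
  fixes N :: "real^'n^'n"
  assumes "finite T"
  shows "det (\<chi> i. if i \<in> T then N $ i + d i *s u else N $ i)
       = det N + (\<Sum>k\<in>T. d k * det (\<chi> i. if i = k then u else N $ i))"
  using assms
proof (induction T rule: finite_induct)
  case empty
  have "(\<chi> i. N $ i) = N" by (simp add: vec_eq_iff)
  then show ?case by simp
next
  case (insert j T)
  define c where "c = (\<lambda>i. if i \<in> T then N $ i + d i *s u else N $ i)"
  have "(\<chi> i. if i \<in> insert j T then N $ i + d i *s u else N $ i)
      = (\<chi> i. if i = j then N $ i + d i *s u else c i)" by (auto simp: vec_eq_iff c_def)
  then have "det (\<chi> i. if i \<in> insert j T then N $ i + d i *s u else N $ i)
      = det (\<chi> i. if i = j then N $ i else c i) + det (\<chi> i. if i = j then d i *s u else c i)"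
    by (simp add: det_row_add)
  also have "(\<chi> i. if i = j then N $ i else c i) = (\<chi> i. if i \<in> T then N $ i + d i *s u else N $ i)"
    using insert by (auto simp: vec_eq_iff c_def)
  also have "det (\<chi> i. if i = j then d i *s u else c i) = d j * det (\<chi> i. if i = j then u else c i)"
  proof -
    have "(\<chi> i. if i = j then d i *s u else c i) = (\<chi> i. if i = j then d j *s u else c i)"
      by (auto simp: vec_eq_iff)
    then show ?thesis by (simp add: det_row_mul)
  qed
  also have "(\<chi> i. if i = j then u else c i) = (\<chi> i. if i = j then u else if i \<in> T then N $ i + d i *s u else N $ i)"
    by (auto simp: vec_eq_iff c_def)
  also have "det \<dots> = det (\<chi> i. if i = j then u else N $ i)" using det_lemmaX insert by blast
  finally show ?case using insert by (simp add: algebra_simps)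
qed

lemma det_rank1:
  fixes N :: "real^'n^'n"
  assumes sym: "transpose N = N" and inv: "invertible N"
  shows "det (N + c *\<^sub>R outer u) = det N * (1 + c * (u \<bullet> (matrix_inv N *v u)))"
proof -
  define x where "x = matrix_inv N *v u"
  have Nx: "N *v x = u" using minv_v[OF inv] by (simp add: x_def)
  have sumx: "(\<Sum>i\<in>UNIV. x$i *s row i N) = u"
  proof -
    have "(\<Sum>i\<in>UNIV. x$i *s row i N) = x v* N"
      by (simp add: vec_eq_iff sum_component vector_matrix_mult_def row_eq mult.commute)
    also have "\<dots> = transpose N *v x" by simp
    finally show ?thesis using sym Nx by simp
  qed
  then have sumx': "(\<Sum>i\<in>UNIV. x$i *s N $ i) = u" by (simp add: row_eq)
  have cr: "det (\<chi> i. if i = k then u else N $ i) = x$k * det N" for k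
    using cramer_lemma_transpose[of k x N] unfolding row_eq sumx' .
  have "N + c *\<^sub>R outer u = (\<chi> i. if i \<in> UNIV then N $ i + (c * u$i) *s u else N $ i)"
    by (simp add: vec_eq_iff outer_def mult_ac)
  then have "det (N + c *\<^sub>R outer u) = det N + (\<Sum>k\<in>UNIV. (c * u$k) * (x$k * det N))"
    using det_rows_expand[of UNIV N "\<lambda>k. c * u$k" u] cr by simp
  also have "\<dots> = det N * (1 + c * (u \<bullet> x))"
    by (simp add: inner_vec_def sum_distrib_left sum_distrib_right algebra_simps)
  finally show ?thesis by (simp add: x_def)
qed

lemma qf_inv_nonneg:
  fixes N :: "real^'n^'n"
  assumes "pd N"
  shows "0 \<le> u \<bullet> (matrix_inv N *v u)"
proof -
  define y where "y = matrix_inv N *v u"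
  have "N *v y = u" using minv_v[OF pd_invertible[OF assms]] by (simp add: y_def)
  then have "u \<bullet> (matrix_inv N *v u) = y \<bullet> (N *v y)" by (simp add: y_def[symmetric] inner_commute)
  then show ?thesis using assms unfolding pd_def by (metis inner_zero_left order_refl less_imp_le)
qed

lemma det_main:
  fixes N :: "real^'n^'n"
  assumes "finite S" "pd N" "\<And>i. i \<in> S \<Longrightarrow> 0 \<le> c i" "det N \<ge> 0"
  shows "det (N + Gm S c u) \<ge> det N * (1 + (\<Sum>i\<in>S. c i * (u i \<bullet> (matrix_inv N *v u i))))"
  using assms(1,3)
proof (induction S rule: finite_induct)
  case empty then show ?case by (simp add: Gm_def)
next
  case (insert j S)
  define t where "t = (\<Sum>i\<in>S. c i * (u i \<bullet> (matrix_inv N *v u i)))"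
  define G where "G = Gm S c u"
  have c0: "\<And>i. i \<in> S \<Longrightarrow> 0 \<le> c i" using insert by auto
  have cj: "0 \<le> c j" using insert by auto
  have psdG: "psd G" unfolding G_def using psd_Gm[OF insert(1) c0] .
  have pdNG: "pd (N + G)" using pd_add_psd[OF assms(2) psdG] .
  have IH: "det (N + G) \<ge> det N * (1 + t)" using insert c0 by (simp add: G_def t_def)
  have t0: "t \<ge> 0" unfolding t_def
    using c0 qf_inv_nonneg[OF assms(2)] by (intro sum_nonneg mult_nonneg_nonneg) auto
  have bound: "\<And>x. x \<bullet> (G *v x) \<le> t * (x \<bullet> (N *v x))" unfolding G_def t_def
    by (rule Gm_bound[OF assms(2) c0])
  define r where "r = u j \<bullet> (matrix_inv (N + G) *v u j)"
  define s where "s = u j \<bullet> (matrix_inv N *v u j)"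
  have cmp: "s \<le> (1 + t) * r" using inv_compare[OF assms(2) psdG bound t0] by (simp add: s_def r_def)
  have r0: "r \<ge> 0" using qf_inv_nonneg[OF pdNG] by (simp add: r_def)
  have "Gm (insert j S) c u = G + c j *\<^sub>R outer (u j)" using insert by (simp add: Gm_def G_def add.commute)
  then have "det (N + Gm (insert j S) c u) = det ((N + G) + c j *\<^sub>R outer (u j))" by (simp add: add.assoc)
  also have "\<dots> = det (N + G) * (1 + c j * r)"
    using det_rank1[OF _ pd_invertible[OF pdNG]] pdNG by (simp add: pd_def r_def)
  also have "\<dots> \<ge> det N * (1 + t) * (1 + c j * r)"
    using IH cj r0 by (intro mult_right_mono) auto
  finally have "det (N + Gm (insert j S) c u) \<ge> det N * ((1 + t) * (1 + c j * r))" by (simp add: mult.assoc)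
  moreover have "(1 + t) * (1 + c j * r) \<ge> 1 + t + c j * s"
  proof -
    have "c j * s \<le> c j * ((1 + t) * r)" using cmp cj by (rule mult_left_mono[OF _ ]) 
    then show ?thesis by (simp add: algebra_simps)
  qed
  ultimately have "det (N + Gm (insert j S) c u) \<ge> det N * (1 + t + c j * s)"
    using assms(4) mult_left_mono[OF \<open>(1 + t) * (1 + c j * r) \<ge> 1 + t + c j * s\<close> assms(4)] by linarith
  then show ?case using insert by (simp add: t_def s_def algebra_simps)
qed




lemma pd_I: "pd (mat 1 :: real^'n^'n)"
  by (simp add: pd_def)

lemma det_pos:
  fixes N :: "real^'n^'n"
  assumes "pd N" shows "det N > 0"
proof (rule ccontr)
  assume "\<not> det N > 0"
  define g where "g = (\<lambda>t::real. (1 - t) *\<^sub>R (mat 1 :: real^'n^'n) + t *\<^sub>R N)"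
  have pdg: "pd (g t)" if "0 \<le> t" "t \<le> 1" for t
  proof (cases "t = 1")
    case True then show ?thesis using assms by (simp add: g_def)
  next
    case False
    then have "0 < 1 - t" using that by simp
    have mv: "((1 - t) *\<^sub>R (mat 1 :: real^'n^'n)) *v x = (1 - t) *\<^sub>R x" for x
      by (simp add: scaleR_matrix_vector_assoc[symmetric])
    then have "pd ((1 - t) *\<^sub>R (mat 1 :: real^'n^'n))" using \<open>0 < 1 - t\<close>
      by (simp add: pd_def transpose_scalar)
    moreover have "psd (t *\<^sub>R N)" using assms that by (intro psd_scale) (auto simp: pd_def psd_def less_imp_le
        intro: order_trans[OF order_refl] dest: spec[where x=0] | metis inner_zero_left less_eq_real_def)+
    ultimately show ?thesis unfolding g_def by (rule pd_add_psd)
  qed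
  have cont: "continuous_on {0..1} (\<lambda>t. - det (g t))"
    unfolding det_def g_def by (simp add: mat_def) (intro continuous_intros)
  have "\<exists>t\<ge>0. t \<le> 1 \<and> - det (g t) = 0"
    by (rule IVT') (use \<open>\<not> det N > 0\<close> cont in \<open>auto simp: g_def\<close>)
  then obtain t where t: "0 \<le> t" "t \<le> 1" "det (g t) = 0" by auto
  then have "invertible (g t)" using pd_invertible pdg by blast
  then show False using t by (simp add: invertible_det_nz)
qed

lemma tr_outer: "trace (H ** outer u) = u \<bullet> (H *v u)"
  by (simp add: trace_def matrix_matrix_mult_def outer_def inner_vec_def matrix_vector_mult_def
      sum_distrib_left mult_ac)

lemma tr_add: "trace ((H::real^'n^'n) ** (A + B)) = trace (H ** A) + trace (H ** B)"
  by (simp add: matrix_add_ldistrib trace_add)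

lemma tr_scale: "trace ((H::real^'n^'n) ** (c *\<^sub>R A)) = c * trace (H ** A)"
  by (simp add: trace_def matrix_matrix_mult_def sum_distrib_left mult_ac)

lemma tr_Gm: "trace ((H::real^'n^'n) ** Gm S c u) = (\<Sum>i\<in>S. c i * (u i \<bullet> (H *v u i)))"
proof (induction S rule: infinite_finite_induct)
  case (infinite S) then show ?case by (simp add: Gm_def trace_def matrix_matrix_mult_def)
next
  case empty then show ?case by (simp add: Gm_def trace_def matrix_matrix_mult_def)
next
  case (insert x F) then show ?case by (simp add: Gm_def tr_add tr_scale tr_outer)
qed

lemma det_scale:
  fixes X :: "real^'n^'n"
  shows "det (r *\<^sub>R X) = r ^ CARD('n) * det X"
proof -
  have "r *\<^sub>R X = (\<chi> i. r *s X $ i)" by (simp add: vec_eq_iff)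
  then have "det (r *\<^sub>R X) = prod (\<lambda>i. r) (UNIV :: 'n set) * det (\<chi> i. X $ i)" by (simp add: det_rows_mul)
  moreover have "(\<chi> i. X $ i) = X" by (simp add: vec_eq_iff)
  ultimately show ?thesis by simp
qed

lemma final_ineq:
  fixes d w \<beta> :: real
  assumes "2 \<le> d" "d \<le> w" "\<beta> = (w - d) / ((d - 1) * w)"
  shows "ln (1 + \<beta> * w) - d * ln (1 + \<beta>) \<ge> mfun (w / d - 1)"
proof -
  have w0: "w > 0" "d > 0" "d - 1 > 0" "w - 1 > 0" using assms by auto
  have b0: "\<beta> \<ge> 0" using assms w0 by (simp add: divide_nonneg_pos)
  have e1: "1 + \<beta> * w = (w / d) * (1 + \<beta>)" using w0 assms(3) by (simp add: field_simps)
  have "ln (1 + \<beta> * w) = ln (w / d) + ln (1 + \<beta>)" unfolding e1 by (subst ln_mult) (use w0 b0 in auto)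
  moreover have "ln (1 + \<beta>) \<le> \<beta>" using b0 ln_le_minus_one[of "1 + \<beta>"] by simp
  moreover have "(d - 1) * \<beta> = (w - d) / w" using w0 assms(3) by (simp add: field_simps)
  moreover have "mfun (w / d - 1) = ln (w / d) - (w - d) / w" using w0 by (simp add: mfun_def field_simps)
  ultimately show ?thesis using w0 mult_left_mono[OF \<open>ln (1 + \<beta>) \<le> \<beta>\<close>, of "d - 1"]
    by (simp add: algebra_simps)
qed




lemma Vmat_Gm: "Vmat S \<pi> = Gm S \<pi> (\<lambda>a. a)"
  by (simp add: Vmat_def Gm_def)

theorem lemma5p4:
  fixes A Al :: "(real^'n) set"
    and \<pi>off \<pi> :: "real^'n \<Rightarrow> real"
    and \<alpha> :: real
    and aplus :: "real^'n"
  assumes dim: "CARD('n) \<ge> 2"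
    and finA: "finite A"
    and spanA: "span A = UNIV"
    and off: "is_dist A \<pi>off"
    and sub: "Al \<subseteq> A"
    and ne: "Al \<noteq> {}"
    and alpha: "0 \<le> \<alpha>" "\<alpha> < 1"
    and pit: "is_dist Al \<pi>"
    and nonsing: "invertible (Mmat A Al \<pi>off \<alpha> \<pi>)"
    and aplus_mem: "aplus \<in> Al"
    and aplus_max: "\<forall>a\<in>Al. wgt A Al \<pi>off \<alpha> \<pi> a \<le> wgt A Al \<pi>off \<alpha> \<pi> aplus"
  shows
    "let w = wgt A Al \<pi>off \<alpha> \<pi> aplus;
         d = real CARD('n);
         \<beta> = (w - d) / ((d - 1) * w);
         \<pi>' = (\<lambda>a. (\<pi> a + \<beta> * (if a = aplus then 1 else 0)) / (1 + \<beta>));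
         \<delta> = w / d - 1
     in dobj A Al \<pi>off \<alpha> \<pi>' - dobj A Al \<pi>off \<alpha> \<pi> \<ge> mfun \<delta>"
proof -
  define w where "w = wgt A Al \<pi>off \<alpha> \<pi> aplus"
  define d where "d = real CARD('n)"
  define \<beta> where "\<beta> = (w - d) / ((d - 1) * w)"
  define \<pi>' where "\<pi>' = (\<lambda>a. (\<pi> a + \<beta> * (if a = aplus then 1 else 0)) / (1 + \<beta>))"
  define M where "M = Mmat A Al \<pi>off \<alpha> \<pi>"
  define H where "H = matrix_inv M"
  have finAl: "finite Al" using finA sub finite_subset by blast
  have pi0: "\<And>a. 0 \<le> \<pi> a" "sum \<pi> Al = 1" using pit by (auto simp: is_dist_def)
  have off0: "\<And>a. 0 \<le> \<pi>off a" "sum \<pi>off A = 1" using off by (auto simp: is_dist_def)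
  have psdM: "psd M" unfolding M_def Mmat_def Vmat_Gm
    using alpha finA finAl pi0 off0 by (intro psd_add psd_scale psd_Gm) auto
  have pdM: "pd M" using psd_inv_pd[OF psdM] nonsing by (simp add: M_def)
  have detM: "det M > 0" using det_pos[OF pdM] .
  define T where "T = (\<Sum>b\<in>A. \<pi>off b * (b \<bullet> (H *v b)))"
  have wgt_eq: "wgt A Al \<pi>off \<alpha> \<pi> a = (1 - \<alpha>) * (a \<bullet> (H *v a)) + \<alpha> * T" for a
    unfolding wgt_def M_def[symmetric] H_def[symmetric] T_def
    by (simp add: tr_add tr_scale tr_outer Vmat_Gm tr_Gm)
  have "trace (H ** M) = d" using minv(2)[OF nonsing] by (simp add: H_def M_def d_def trace_I)
  moreover have "trace (H ** M) = (1 - \<alpha>) * (\<Sum>a\<in>Al. \<pi> a * (a \<bullet> (H *v a))) + \<alpha> * T"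
    unfolding M_def Mmat_def T_def by (simp add: tr_add tr_scale Vmat_Gm tr_Gm)
  moreover have "(\<Sum>a\<in>Al. \<pi> a * wgt A Al \<pi>off \<alpha> \<pi> a)
      = (\<Sum>a\<in>Al. (1 - \<alpha>) * (\<pi> a * (a \<bullet> (H *v a))) + (\<alpha> * T) * \<pi> a)"
    by (intro sum.cong refl) (simp add: wgt_eq algebra_simps)
  moreover have "\<dots> = (1 - \<alpha>) * (\<Sum>a\<in>Al. \<pi> a * (a \<bullet> (H *v a))) + (\<alpha> * T) * sum \<pi> Al"
    by (simp add: sum.distrib sum_distrib_left[symmetric])
  ultimately have dsum: "(\<Sum>a\<in>Al. \<pi> a * wgt A Al \<pi>off \<alpha> \<pi> a) = d"
    using pi0 by simp
  have "(\<Sum>a\<in>Al. \<pi> a * wgt A Al \<pi>off \<alpha> \<pi> a) \<le> (\<Sum>a\<in>Al. \<pi> a * w)"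
    using aplus_max pi0 by (intro sum_mono mult_left_mono) (auto simp: w_def)
  then have wd: "d \<le> w" using dsum pi0 by (simp add: sum_distrib_right[symmetric])
  have d2: "2 \<le> d" using dim by (simp add: d_def)
  have b0: "\<beta> \<ge> 0" using wd d2 by (simp add: \<beta>_def divide_nonneg_pos)
  define S where "S = insert None (Some ` A)"
  define c where "c = (\<lambda>i. case i of None \<Rightarrow> \<beta> * (1 - \<alpha>) | Some b \<Rightarrow> \<beta> * \<alpha> * \<pi>off b)"
  define u where "u = (\<lambda>i. case i of None \<Rightarrow> aplus | Some b \<Rightarrow> b)"
  have finS: "finite S" using finA by (simp add: S_def)
  have c0: "\<And>i. i \<in> S \<Longrightarrow> 0 \<le> c i" using b0 alpha off0 by (auto simp: c_def S_def)
  have sumS: "(\<Sum>i\<in>S. f i) = f None + (\<Sum>b\<in>A. f (Some b))" for f :: "(real^'n) option \<Rightarrow> 'z::comm_monoid_add"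
    using finA by (simp add: S_def sum.reindex)
  have GmS: "Gm S c u = (\<beta> * (1 - \<alpha>)) *\<^sub>R outer aplus + (\<beta> * \<alpha>) *\<^sub>R Vmat A \<pi>off"
    unfolding Gm_def sumS by (simp add: c_def u_def Vmat_def scaleR_sum_right)
  have tS: "(\<Sum>i\<in>S. c i * (u i \<bullet> (H *v u i))) = \<beta> * w"
    unfolding sumS by (simp add: c_def u_def w_def wgt_eq T_def sum_distrib_left algebra_simps)
  have V': "Vmat Al \<pi>' = (1 / (1 + \<beta>)) *\<^sub>R (Vmat Al \<pi> + \<beta> *\<^sub>R outer aplus)"
  proof -
    have "Vmat Al \<pi>' = (\<Sum>a\<in>Al. (1 / (1 + \<beta>)) *\<^sub>R (\<pi> a *\<^sub>R outer a + (if a = aplus then \<beta> *\<^sub>R outer a else 0)))"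
      unfolding Vmat_def \<pi>'_def by (intro sum.cong refl) (auto simp del: scaleR_add_left simp add: scaleR_add_left[symmetric] divide_inverse mult.commute)
    also have "\<dots> = (1 / (1 + \<beta>)) *\<^sub>R (Vmat Al \<pi> + \<beta> *\<^sub>R outer aplus)"
      unfolding scaleR_sum_right[symmetric] sum.distrib Vmat_def using finAl aplus_mem by simp
    finally show ?thesis .
  qed
  have M': "Mmat A Al \<pi>off \<alpha> \<pi>' = (1 / (1 + \<beta>)) *\<^sub>R (M + Gm S c u)"
  proof -
    have "(1 + \<beta>) *\<^sub>R Mmat A Al \<pi>off \<alpha> \<pi>' = M + Gm S c u"
    proof -
      let ?X = "Vmat Al \<pi> + \<beta> *\<^sub>R outer aplus"
      have e: "(1 + \<beta>) *\<^sub>R ((1 - \<alpha>) *\<^sub>R ((1 / (1 + \<beta>)) *\<^sub>R ?X)) = (1 - \<alpha>) *\<^sub>R ?X"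
        using b0 by (simp add: scaleR_scaleR)
      have "(1 + \<beta>) *\<^sub>R Mmat A Al \<pi>off \<alpha> \<pi>'
          = (1 + \<beta>) *\<^sub>R ((1 - \<alpha>) *\<^sub>R ((1 / (1 + \<beta>)) *\<^sub>R ?X)) + (1 + \<beta>) *\<^sub>R (\<alpha> *\<^sub>R Vmat A \<pi>off)"
        unfolding Mmat_def V' by (simp add: scaleR_add_right)
      also have "\<dots> = (1 - \<alpha>) *\<^sub>R ?X + ((1 + \<beta>) * \<alpha>) *\<^sub>R Vmat A \<pi>off" unfolding e by simp
      also have "\<dots> = M + Gm S c u"
        unfolding GmS M_def Mmat_def by (simp add: scaleR_add_right scaleR_add_left algebra_simps)
      finally show ?thesis .
    qed
    then have "(1 / (1 + \<beta>)) *\<^sub>R ((1 + \<beta>) *\<^sub>R Mmat A Al \<pi>off \<alpha> \<pi>') = (1 / (1 + \<beta>)) *\<^sub>R (M + Gm S c u)"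
      by simp
    then show ?thesis using b0 by (simp add: scaleR_scaleR)
  qed
  have main: "det (M + Gm S c u) \<ge> det M * (1 + \<beta> * w)"
  proof -
    have "det (M + Gm S c u) \<ge> det M * (1 + (\<Sum>i\<in>S. c i * (u i \<bullet> (matrix_inv M *v u i))))"
      by (rule det_main[OF finS pdM]) (use c0 detM in auto)
    then show ?thesis using tS by (simp add: H_def)
  qed
  have bw: "1 + \<beta> * w > 0" using b0 wd d2 by (simp add: add_pos_nonneg)
  have detMG: "det (M + Gm S c u) > 0" using main detM bw
    by (meson mult_pos_pos order_less_le_trans)
  have dobj': "dobj A Al \<pi>off \<alpha> \<pi>' = d * ln (1 / (1 + \<beta>)) + ln (det (M + Gm S c u))"
    unfolding dobj_def M' det_scale using detMG b0
    by (simp add: ln_mult_pos ln_realpow d_def)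
  have "ln (det (M + Gm S c u)) \<ge> ln (det M) + ln (1 + \<beta> * w)"
  proof -
    have "ln (det M * (1 + \<beta> * w)) \<le> ln (det (M + Gm S c u))"
      using main detM bw detMG by (subst ln_le_cancel_iff) auto
    then show ?thesis using detM bw by (simp add: ln_mult_pos)
  qed
  then have "dobj A Al \<pi>off \<alpha> \<pi>' - dobj A Al \<pi>off \<alpha> \<pi> \<ge> ln (1 + \<beta> * w) - d * ln (1 + \<beta>)"
  proof -
    have l: "ln (1 / (1 + \<beta>)) = - ln (1 + \<beta>)" using b0 by (simp add: ln_div)
    have "dobj A Al \<pi>off \<alpha> \<pi> = ln (det M)" by (simp add: dobj_def M_def)
    then show ?thesis using dobj' l \<open>ln (det (M + Gm S c u)) \<ge> ln (det M) + ln (1 + \<beta> * w)\<close> by simp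
  qed
  moreover have "ln (1 + \<beta> * w) - d * ln (1 + \<beta>) \<ge> mfun (w / d - 1)"
    by (rule final_ineq[OF d2 wd \<beta>_def])
  ultimately show ?thesis
    unfolding Let_def w_def[symmetric] d_def[symmetric] \<beta>_def[symmetric] \<pi>'_def[symmetric] by linarith
qed


end
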